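(* Let $a_0,a_1,b_0,b_1$ be real numbers such that $a(N)=a_1N+a_0>0$ and $b(N)=b_1N+b_0>0$ for all positive integers $N$, and let $k\ge1$ be an integer. Define the polynomial in $N$ $$\mathcal N_k(N):=\sum_{i=0}^{k-1}(-1)^i\binom{k-1}{i}\prod_{j=-k+1}^{-i-1}(2N+a(N)+b(N)+j-2)\prod_{j=-i}^{k-1-i}(N+j)(N+a(N)+j-1)\prod_{j=k-i}^{k-1}(2N+a(N)+b(N)+j-2).$$ Then the degree of $\mathcal N_k(N)$ in $N$ is $2k$.
   Context: Empty products equal $1$. *)

theory Defs
  imports "HOL-Computational_Algebra.Polynomial"
begin

text \<open>Factor 2N + a(N) + b(N) + j - 2 is the linear polynomial with constant term a0+b0+j-2
  and leading coefficient 2+a1+b1.\<close>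

definition factA :: "real \<Rightarrow> real \<Rightarrow> real \<Rightarrow> real \<Rightarrow> int \<Rightarrow> real poly" where
  "factA a0 a1 b0 b1 j = [: a0 + b0 + of_int j - 2, 2 + a1 + b1 :]"

definition factB :: "real \<Rightarrow> real \<Rightarrow> int \<Rightarrow> real poly" where
  "factB a0 a1 j = [: of_int j, 1 :] * [: a0 + of_int j - 1, 1 + a1 :]"

definition calN :: "real \<Rightarrow> real \<Rightarrow> real \<Rightarrow> real \<Rightarrow> nat \<Rightarrow> real poly" where
  "calN a0 a1 b0 b1 k =
     (\<Sum>i = 0..k-1. smult ((-1) ^ i * of_nat ((k-1) choose i))
        ((\<Prod>j \<in> {-int k + 1 .. -int i - 1}. factA a0 a1 b0 b1 j)
       * (\<Prod>j \<in> {-int i .. int k - 1 - int i}. factB a0 a1 j)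
       * (\<Prod>j \<in> {int k - int i .. int k - 1}. factA a0 a1 b0 b1 j)))"

end

theory Submission
  imports Defs
begin


definition eqm :: "nat \<Rightarrow> real poly \<Rightarrow> real poly \<Rightarrow> bool" where
  "eqm k p q \<longleftrightarrow> (\<forall>r<k. coeff p r = coeff q r)"

lemma eqm_refl: "eqm k p p" by (simp add: eqm_def)
lemma eqm_sym: "eqm k p q \<Longrightarrow> eqm k q p" by (simp add: eqm_def)
lemma eqm_trans: "eqm k p q \<Longrightarrow> eqm k q r \<Longrightarrow> eqm k p r" by (simp add: eqm_def)

lemma eqm_mult: assumes "eqm k p q" "eqm k p' q'" shows "eqm k (p*p') (q*q')"
  using assms unfolding eqm_def coeff_mult by (auto intro!: sum.cong)

lemma eqm_prod: "finite A \<Longrightarrow> (\<And>x. x \<in> A \<Longrightarrow> eqm k (f x) (g x)) \<Longrightarrow> eqm k (prod f A) (prod g A)"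
  by (induction A rule: finite_induct) (auto intro: eqm_mult eqm_refl)

lemma eqm_add: "eqm k p q \<Longrightarrow> eqm k p' q' \<Longrightarrow> eqm k (p+p') (q+q')"
  by (simp add: eqm_def)
lemma eqm_smult: "eqm k p q \<Longrightarrow> eqm k (smult a p) (smult a q)"
  by (simp add: eqm_def)
lemma eqm_sum: "(\<And>x. x \<in> A \<Longrightarrow> eqm k (f x) (g x)) \<Longrightarrow> eqm k (sum f A) (sum g A)"
  by (induction A rule: infinite_finite_induct) (auto intro: eqm_add eqm_refl)

lemma eqm_coeff: "eqm k p q \<Longrightarrow> r < k \<Longrightarrow> coeff p r = coeff q r" by (simp add: eqm_def)

lemma coeff_mult_bounds:
  fixes p q :: "'a::comm_semiring_1 poly"
  assumes "degree p \<le> i" "degree q \<le> j"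
  shows "coeff (p*q) (i+j) = coeff p i * coeff q j"
proof (cases "degree p = i \<and> degree q = j")
  case True then show ?thesis using coeff_mult_degree_sum[of p q] by simp
next
  case False
  then have "degree p + degree q < i + j" using assms by auto
  then have "degree (p*q) < i+j" using degree_mult_le[of p q] by linarith
  then have "coeff (p*q) (i+j) = 0" by (simp add: coeff_eq_0)
  moreover have "coeff p i * coeff q j = 0"
  proof (cases "degree p = i")
    case True then have "degree q < j" using False assms by auto
    then show ?thesis by (simp add: coeff_eq_0)
  next
    case False then have "degree p < i" using assms by auto
    then show ?thesis by (simp add: coeff_eq_0)
  qed
  ultimately show ?thesis by simp
qed

definition graded :: "real poly poly \<Rightarrow> bool" where
  "graded P \<longleftrightarrow> (\<forall>r. degree (coeff P r) \<le> r)"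

lemma graded_mult: assumes "graded P" "graded Q" shows "graded (P*Q)"
  unfolding graded_def coeff_mult
proof
  fix r
  show "degree (\<Sum>i\<le>r. coeff P i * coeff Q (r - i)) \<le> r"
  proof (rule degree_sum_le)
    fix i assume "i \<in> {..r}"
    then have "degree (coeff P i) + degree (coeff Q (r-i)) \<le> r"
      using assms unfolding graded_def by (metis add_le_mono atMost_iff le_add_diff_inverse)
    then show "degree (coeff P i * coeff Q (r - i)) \<le> r" using degree_mult_le order_trans by blast
  qed simp
qed

lemma graded_1: "graded 1" by (simp add: graded_def coeff_1)
lemma graded_add: "graded P \<Longrightarrow> graded Q \<Longrightarrow> graded (P+Q)"
  by (auto simp: graded_def intro: order_trans[OF degree_add_le])

lemma graded_prod: "(\<And>x. x \<in> A \<Longrightarrow> graded (f x)) \<Longrightarrow> graded (prod f A)"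
  by (induction A rule: infinite_finite_induct) (auto intro: graded_mult graded_1)
lemma graded_0: "graded 0" by (simp add: graded_def)
lemma graded_sum: "(\<And>x. x \<in> A \<Longrightarrow> graded (f x)) \<Longrightarrow> graded (sum f A)"
  by (induction A rule: infinite_finite_induct) (simp_all add: graded_add graded_0)
lemma graded_power: "graded P \<Longrightarrow> graded (P^n)"
  by (induction n) (auto intro: graded_mult graded_1)

lemma graded_lin: "degree A0 = 0 \<Longrightarrow> degree A1 \<le> 1 \<Longrightarrow> graded [:A0, A1:]"
  unfolding graded_def
proof
  fix r assume "degree A0 = 0" "degree A1 \<le> 1"
  then show "degree (coeff [:A0, A1:] r) \<le> r"
    by (cases r; cases "r - 1") (auto simp: coeff_pCons)
qed

definition topp :: "real poly poly \<Rightarrow> real poly" where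
  "topp P = Abs_poly (\<lambda>r. coeff (coeff P r) r)"

lemma coeff_topp: "coeff (topp P) r = coeff (coeff P r) r"
  unfolding topp_def by (subst coeff_Abs_poly[where n="degree P"]) (auto simp: coeff_eq_0)

lemma topp_mult: assumes "graded P" "graded Q" shows "topp (P*Q) = topp P * topp Q"
proof (rule poly_eqI)
  fix r
  have "coeff (topp (P*Q)) r = (\<Sum>i\<le>r. coeff (coeff P i * coeff Q (r - i)) r)"
    by (simp add: coeff_topp coeff_mult coeff_sum)
  also have "\<dots> = (\<Sum>i\<le>r. coeff (coeff P i) i * coeff (coeff Q (r - i)) (r-i))"
  proof (rule sum.cong)
    fix i assume "i \<in> {..r}"
    then have "r = i + (r - i)" by simp
    then show "coeff (coeff P i * coeff Q (r - i)) r = coeff (coeff P i) i * coeff (coeff Q (r - i)) (r-i)"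
      using coeff_mult_bounds[of "coeff P i" i "coeff Q (r-i)" "r-i"] assms
      unfolding graded_def by metis
  qed simp
  also have "\<dots> = coeff (topp P * topp Q) r" by (simp add: coeff_mult coeff_topp)
  finally show "coeff (topp (P*Q)) r = coeff (topp P * topp Q) r" .
qed

lemma topp_1: "topp 1 = 1" by (rule poly_eqI) (simp add: coeff_topp coeff_1)
lemma topp_add: "topp (P+Q) = topp P + topp Q" by (rule poly_eqI) (simp add: coeff_topp)
lemma topp_0: "topp 0 = 0" by (rule poly_eqI) (simp add: coeff_topp)
lemma topp_sum: "topp (sum f A) = (\<Sum>x\<in>A. topp (f x))"
  by (induction A rule: infinite_finite_induct) (auto simp: topp_add topp_0)
lemma topp_prod: "(\<And>x. x \<in> A \<Longrightarrow> graded (f x)) \<Longrightarrow> topp (prod f A) = (\<Prod>x\<in>A. topp (f x))"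
  by (induction A rule: infinite_finite_induct) (auto simp: topp_mult topp_1 graded_prod)
lemma topp_power: "graded P \<Longrightarrow> topp (P^n) = topp P ^ n"
  by (induction n) (auto simp: topp_mult topp_1 graded_power)
lemma topp_lin: "topp [:A0, A1:] = [:coeff A0 0, coeff A1 1:]"
  by (rule poly_eqI) (simp add: coeff_topp coeff_pCons split: nat.split)

definition ev :: "real \<Rightarrow> real poly poly \<Rightarrow> real poly" where
  "ev x P = map_poly (\<lambda>q. poly q x) P"

lemma coeff_ev: "coeff (ev x P) r = poly (coeff P r) x"
  by (simp add: ev_def coeff_map_poly)
lemma ev_mult: "ev x (P*Q) = ev x P * ev x Q"
  by (rule poly_eqI) (simp add: coeff_ev coeff_mult poly_sum)
lemma ev_add: "ev x (P+Q) = ev x P + ev x Q"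
  by (rule poly_eqI) (simp add: coeff_ev)
lemma ev_1: "ev x 1 = 1"
  by (rule poly_eqI) (simp add: coeff_ev coeff_1)
lemma ev_0: "ev x 0 = 0"
  by (rule poly_eqI) (simp add: coeff_ev)
lemma ev_prod: "ev x (prod f A) = (\<Prod>y\<in>A. ev x (f y))"
  by (induction A rule: infinite_finite_induct) (auto simp: ev_mult ev_1)
lemma ev_sum: "ev x (sum f A) = (\<Sum>y\<in>A. ev x (f y))"
  by (induction A rule: infinite_finite_induct) (auto simp: ev_add ev_0)
lemma ev_power: "ev x (P^n) = ev x P ^ n"
  by (induction n) (auto simp: ev_mult ev_1)
lemma ev_lin: "ev x [:A0, A1:] = [:poly A0 x, poly A1 x:]"
  by (rule poly_eqI) (simp add: coeff_ev coeff_pCons split: nat.split)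

definition sh :: "real \<Rightarrow> real poly poly \<Rightarrow> real poly poly" where
  "sh l P = map_poly (\<lambda>q. pcompose q [:l,1:]) P"

lemma coeff_sh: "coeff (sh l P) r = pcompose (coeff P r) [:l,1:]"
  by (simp add: sh_def coeff_map_poly)

lemma graded_sh: "graded P \<Longrightarrow> graded (sh l P)"
  by (simp add: graded_def coeff_sh degree_pcompose)

lemma topp_sh: assumes "graded P" shows "topp (sh l P) = topp P"
proof (rule poly_eqI)
  fix r
  have d: "degree (coeff P r) \<le> r" using assms graded_def by blast
  show "coeff (topp (sh l P)) r = coeff (topp P) r"
  proof (cases "degree (coeff P r) = r")
    case True
    then have "degree (pcompose (coeff P r) [:l,1:]) = r" by (simp add: degree_pcompose)
    then show ?thesis using True lead_coeff_comp[of "[:l,1:]" "coeff P r"]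
      by (simp add: coeff_topp coeff_sh)
  next
    case False
    then have "degree (pcompose (coeff P r) [:l,1:]) < r" using d by (simp add: degree_pcompose)
    then show ?thesis using False d by (simp add: coeff_topp coeff_sh coeff_eq_0)
  qed
qed

lemma ev_sh: "ev x (sh l P) = ev (x + l) P"
  by (rule poly_eqI) (simp add: coeff_ev coeff_sh poly_pcompose add.commute)



definition fd :: "nat \<Rightarrow> (nat \<Rightarrow> real) \<Rightarrow> real" where
  "fd n f = (\<Sum>i\<le>n. (-1)^i * of_nat (n choose i) * f i)"

lemma fd_Suc: "fd (Suc n) f = fd n (\<lambda>i. f i - f (Suc i))"
proof -
  define g where "g i = (-1::real)^i * of_nat (n choose i) * f i" for i
  define h where "h i = (-1::real)^i * of_nat (n choose Suc i) * f (Suc i)" for i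
  define h2 where "h2 i = (-1::real)^i * of_nat (n choose i) * f (Suc i)" for i
  have g0: "g (Suc n) = 0" by (simp add: g_def)
  have "fd n f = (\<Sum>i\<le>Suc n. g i)" by (simp add: fd_def g_def)
  also have "\<dots> = g 0 + (\<Sum>i\<le>n. g (Suc i))" by (rule sum.atMost_Suc_shift)
  also have "(\<Sum>i\<le>n. g (Suc i)) = - (\<Sum>i\<le>n. h i)"
    by (simp add: sum_negf[symmetric] g_def h_def)
  finally have A: "fd n f = f 0 - (\<Sum>i\<le>n. h i)" by (simp add: g_def)
  have "fd (Suc n) f = f 0 + (\<Sum>i\<le>n. (-1)^(Suc i) * of_nat (Suc n choose Suc i) * f (Suc i))"
    unfolding fd_def by (subst sum.atMost_Suc_shift) simp
  also have "(\<Sum>i\<le>n. (-1)^(Suc i) * of_nat (Suc n choose Suc i) * f (Suc i)) = (\<Sum>i\<le>n. - h i - h2 i)"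
    by (rule sum.cong) (simp_all add: h_def h2_def algebra_simps)
  also have "\<dots> = - (\<Sum>i\<le>n. h i) - (\<Sum>i\<le>n. h2 i)" by (simp add: sum_subtractf sum_negf)
  finally have B: "fd (Suc n) f = fd n f - (\<Sum>i\<le>n. h2 i)" using A by simp
  have "fd n (\<lambda>i. f i - f (Suc i)) = (\<Sum>i\<le>n. g i - h2 i)"
    unfolding fd_def by (rule sum.cong) (simp_all add: g_def h2_def algebra_simps)
  also have "\<dots> = fd n f - (\<Sum>i\<le>n. h2 i)" by (simp add: sum_subtractf fd_def g_def)
  finally show ?thesis using B by simp
qed

lemma fd_sum: "fd n (\<lambda>i. \<Sum>e\<in>E. g e i) = (\<Sum>e\<in>E. fd n (g e))"
  unfolding fd_def sum_distrib_left by (rule sum.swap)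
lemma fd_cmult: "fd n (\<lambda>i. c * g i) = c * fd n g"
  unfolding fd_def sum_distrib_left by (rule sum.cong) (simp_all add: mult.left_commute)

lemma fd_mon: "d \<le> n \<Longrightarrow> fd n (\<lambda>i. (- real i)^d) = (if d = n then fact n else 0)"
proof (induction n arbitrary: d)
  case 0 then show ?case by (simp add: fd_def)
next
  case (Suc n)
  define cf where "cf e = - (of_nat (d choose e) * (-1::real)^(d-e))" for e
  have step: "(- real i)^d - (- real (Suc i))^d = (\<Sum>e<d. cf e * (- real i)^e)" for i
  proof -
    define x where "x = - real i"
    define S where "S = (\<Sum>e<d. of_nat (d choose e) * x^e * (-1::real)^(d-e))"
    have "(- real (Suc i))^d = (x + (-1))^d" by (rule arg_cong[where f="\<lambda>t. t^d"]) (simp add: x_def)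
    also have "\<dots> = (\<Sum>e\<le>d. of_nat (d choose e) * x^e * (-1)^(d-e))"
      by (rule binomial_ring)
    also have "\<dots> = S + x^d"
      unfolding S_def lessThan_Suc_atMost[symmetric] by (subst sum.lessThan_Suc) simp
    finally have e1: "(- real i)^d - (- real (Suc i))^d = - S" by (simp add: x_def)
    have "- S = (\<Sum>e<d. cf e * x^e)"
      unfolding S_def cf_def sum_negf[symmetric] by (rule sum.cong) simp_all
    then show ?thesis using e1 by (simp add: x_def)
  qed
  have "fd (Suc n) (\<lambda>i. (- real i)^d) = fd n (\<lambda>i. \<Sum>e<d. cf e * (- real i)^e)"
    by (simp only: fd_Suc step)
  also have "\<dots> = (\<Sum>e<d. cf e * fd n (\<lambda>i. (- real i)^e))"
    by (simp only: fd_sum fd_cmult)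
  also have "\<dots> = (\<Sum>e<d. cf e * (if e = n then fact n else 0))"
  proof (rule sum.cong[OF refl])
    fix e assume "e \<in> {..<d}"
    then have "e \<le> n" using Suc.prems by simp
    then show "cf e * fd n (\<lambda>i. (- real i)^e) = cf e * (if e = n then fact n else 0)"
      by (simp only: Suc.IH)
  qed
  also have "\<dots> = (if d = Suc n then fact (Suc n) else 0)"
  proof (cases "d = Suc n")
    case True
    have "(\<Sum>e<d. cf e * (if e = n then fact n else (0::real))) = (\<Sum>e<d. if e = n then cf e * fact n else 0)"
      by (rule sum.cong) auto
    also have "\<dots> = cf n * fact n" using True by (simp add: sum.delta)
    finally show ?thesis using True by (simp add: cf_def fact_Suc)
  next
    case False
    then have "d \<le> n" using Suc.prems by simp
    then have "(\<Sum>e<d. cf e * (if e = n then fact n else (0::real))) = 0"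
      by (intro sum.neutral) auto
    then show ?thesis using False by simp
  qed
  finally show ?case .
qed

lemma fd_poly: assumes "degree Q \<le> n" shows "fd n (\<lambda>i. poly Q (- real i)) = fact n * coeff Q n"
proof -
  have pq: "poly Q x = (\<Sum>d\<le>n. coeff Q d * x^d)" for x
  proof -
    have "poly Q x = (\<Sum>d\<le>degree Q. coeff Q d * x^d)" by (simp add: poly_altdef)
    also have "\<dots> = (\<Sum>d\<le>n. coeff Q d * x^d)"
      using assms by (intro sum.mono_neutral_left) (auto simp: coeff_eq_0)
    finally show ?thesis .
  qed
  have "fd n (\<lambda>i. poly Q (- real i)) = (\<Sum>d\<le>n. coeff Q d * fd n (\<lambda>i. (- real i)^d))"
    by (simp only: pq fd_sum fd_cmult)
  also have "\<dots> = (\<Sum>d\<le>n. if d = n then coeff Q d * fact n else 0)"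
    by (intro sum.cong) (auto simp: fd_mon)
  also have "\<dots> = fact n * coeff Q n" by (simp add: sum.delta)
  finally show ?thesis .
qed



definition nn :: "real poly \<Rightarrow> bool" where "nn p \<longleftrightarrow> (\<forall>i. coeff p i \<ge> 0)"

lemma nn_mult: "nn p \<Longrightarrow> nn q \<Longrightarrow> nn (p*q)"
  unfolding nn_def coeff_mult by (auto intro!: sum_nonneg)

lemma nn_power: "nn p \<Longrightarrow> nn (p^n)"
  apply (induction n)
   apply (simp add: nn_def coeff_1)
  by (simp add: nn_mult)

lemma eqm_power: "eqm k p q \<Longrightarrow> eqm k (p^n) (q^n)"
  by (induction n) (auto intro: eqm_mult eqm_refl)

lemma Y_power: "([:0,1:]::real poly)^n = monom 1 n"
  by (induction n) (auto simp: monom_Suc)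

lemma of_nat_mult_poly: "(of_nat n :: real poly) * p = smult (of_nat n) p"
  by (simp add: of_nat_poly)

lemma lam_pos:
  fixes \<alpha> c :: real and k :: nat
  assumes "\<alpha> > 0" "c > \<alpha>" "c > 1" "k \<ge> 1"
  shows "coeff (([:1,1:]*[:\<alpha>,1:]*([:1/c:]*(\<Sum>r<k. [:0,-1/c:]^r)))^k) (k-1) > 0"
proof -
  define \<gamma> where "\<gamma> = 1/c"
  define \<delta> where "\<delta> = 1 - \<gamma>"
  define \<epsilon> where "\<epsilon> = 1 - \<alpha>*\<gamma>"
  have gpos: "\<gamma> > 0" using assms by (simp add: \<gamma>_def)
  have dpos: "\<delta> > 0" using assms by (simp add: \<delta>_def \<gamma>_def)
  have epos: "\<epsilon> > 0" using assms by (simp add: \<epsilon>_def \<gamma>_def field_simps)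
  define X where "X = ([:0,-1/c:] :: real poly)"
  define A1 where "A1 = [:1, \<gamma>:]"
  define Y where "Y = ([:0,1:] :: real poly)"
  define G where "G = (\<Sum>r<k. X^r)"
  define Z where "Z = A1 * G"
  have A1eq: "A1 = 1 - X" by (simp add: A1_def X_def \<gamma>_def one_pCons)
  have Z: "Z = 1 - X^k"
    unfolding Z_def G_def A1eq by (rule one_diff_power_eq[symmetric])
  have eZ: "eqm k Z 1"
  proof -
    have X1: "X = monom (-1/c) 1" by (simp add: X_def monom_Suc monom_0)
    have "X^k = monom ((-1/c)^k) k" unfolding X1 monom_power by simp
    then show ?thesis unfolding Z eqm_def by (auto simp: coeff_monom)
  qed
  have nnA: "nn (A1^n)" for n
    by (rule nn_power) (auto simp: nn_def A1_def coeff_pCons gpos less_imp_le split: nat.split)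
  have A1pos: "coeff (A1^k) (k-1) > 0"
  proof -
    have "degree (A1^(k-1)) = k-1" using gpos by (simp add: A1_def degree_power_eq)
    moreover have "lead_coeff (A1^(k-1)) = \<gamma>^(k-1)" using gpos by (simp add: A1_def lead_coeff_power)
    ultimately have c1: "coeff (A1^(k-1)) (k-1) > 0" using gpos by simp
    have "A1^k = A1 * A1^(k-1)" using assms by (simp add: power_eq_if)
    then have "coeff (A1^k) (k-1) = (\<Sum>i\<le>k-1. coeff A1 i * coeff (A1^(k-1)) (k-1-i))"
      by (simp add: coeff_mult)
    also have "\<dots> \<ge> coeff A1 0 * coeff (A1^(k-1)) (k-1-0)"
      using nnA[of 1] nnA[of "k-1"] unfolding nn_def
      by (intro member_le_sum) auto
    finally show ?thesis using c1 by (simp add: A1_def)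
  qed
  define T where "T p q = of_nat (k choose p) * (smult \<delta> Y)^p * A1^(k-p) *
        (of_nat (k choose q) * (smult \<epsilon> Y)^q * (smult \<alpha> A1)^(k-q)) * G^k" for p q
  define K where "K p q = of_nat (k choose p) * of_nat (k choose q) * \<delta>^p * \<epsilon>^q * \<alpha>^(k-q)" for p q
  have T0: "T p q = smult (K p q) (Y^p * Y^q * (A1^(k-p) * A1^(k-q)) * G^k)" for p q
    unfolding T_def K_def by (simp add: smult_power of_nat_mult_poly ac_simps)
  have T: "T p q = smult (K p q) (monom 1 (p+q) * (A1^(k-p-q) * Z^k))" if "p+q \<le> k" for p q
  proof -
    have ex: "(k-p)+(k-q) = (k-p-q) + k" using that by simp
    have e1: "A1^(k-p) * A1^(k-q) = A1^(k-p-q) * A1^k" by (simp only: power_add[symmetric] ex)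
    have "A1^(k-p) * A1^(k-q) * G^k = A1^(k-p-q) * Z^k"
      unfolding e1 Z_def power_mult_distrib by (simp only: mult.assoc)
    moreover have "Y^p * Y^q = monom 1 (p+q)" by (simp add: Y_def Y_power mult_monom)
    ultimately show ?thesis unfolding T0 by (metis mult.assoc)
  qed
  have Tbig: "coeff (T p q) (k-1) = 0" if "p+q \<ge> k" for p q
  proof -
    have "Y^p * Y^q = monom 1 (p+q)" by (simp add: Y_def Y_power mult_monom)
    then have "T p q = smult (K p q) (monom 1 (p+q) * ((A1^(k-p) * A1^(k-q)) * G^k))"
      unfolding T0 by (simp add: ac_simps)
    then show ?thesis using that assms by (simp add: coeff_monom_mult)
  qed
  have ZZ: "eqm k (P * Z^k) P" for P
    using eqm_mult[OF eqm_refl eqm_power[OF eZ, of k]] by simp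
  have Tnn: "coeff (T p q) (k-1) \<ge> 0" for p q
  proof (cases "p+q \<le> k-1")
    case True
    then have "coeff (T p q) (k-1) = K p q * coeff (A1^(k-p-q) * Z^k) (k-1-(p+q))"
      using assms by (simp add: T coeff_monom_mult)
    also have "coeff (A1^(k-p-q) * Z^k) (k-1-(p+q)) = coeff (A1^(k-p-q)) (k-1-(p+q))"
      using assms by (intro eqm_coeff[OF ZZ]) auto
    finally show ?thesis using nnA[of "k-p-q"] dpos epos assms
      by (auto simp: nn_def K_def intro!: mult_nonneg_nonneg)
  next
    case False then show ?thesis using Tbig[of p q] by simp
  qed
  have T00: "coeff (T 0 0) (k-1) > 0"
  proof -
    have "coeff (T 0 0) (k-1) = K 0 0 * coeff (A1^k * Z^k) (k-1)"
      using assms by (simp add: T coeff_monom_mult)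
    also have "coeff (A1^k * Z^k) (k-1) = coeff (A1^k) (k-1)"
      using assms by (intro eqm_coeff[OF ZZ]) auto
    finally show ?thesis using A1pos assms by (simp add: K_def)
  qed
  have B1: "[:1,1:] = smult \<delta> Y + A1" by (simp add: \<delta>_def Y_def A1_def)
  have B2: "[:\<alpha>,1:] = smult \<epsilon> Y + smult \<alpha> A1" by (simp add: \<epsilon>_def Y_def A1_def algebra_simps)
  have "([:1,1:]*[:\<alpha>,1:]*([:1/c:]*(\<Sum>r<k. [:0,-1/c:]^r)))^k
      = smult ((1/c)^k) ([:1,1:]^k * [:\<alpha>,1:]^k * G^k)"
  proof -
    have cG: "[:1/c:] * (\<Sum>r<k. [:0,-1/c:]^r) = smult (1/c) G" unfolding G_def X_def by simp
    show ?thesis by (simp only: cG power_mult_distrib smult_power mult_smult_right)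
  qed
  also have "[:1,1:]^k * [:\<alpha>,1:]^k * G^k = (\<Sum>p\<le>k. \<Sum>q\<le>k. T p q)"
    unfolding B1 B2 binomial_ring unfolding sum_product unfolding sum_distrib_right T_def ..
  finally have E: "coeff (([:1,1:]*[:\<alpha>,1:]*([:1/c:]*(\<Sum>r<k. [:0,-1/c:]^r)))^k) (k-1)
      = (1/c)^k * (\<Sum>p\<le>k. \<Sum>q\<le>k. coeff (T p q) (k-1))"
    by (simp add: coeff_sum)
  have "(\<Sum>p\<le>k. \<Sum>q\<le>k. coeff (T p q) (k-1)) > 0"
  proof (rule sum_pos2[of _ 0])
    show "0 < (\<Sum>q\<le>k. coeff (T 0 q) (k - 1))"
      by (rule sum_pos2[of _ 0]) (use T00 Tnn in auto)
  qed (use Tnn in \<open>auto intro: sum_nonneg\<close>)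
  then show ?thesis unfolding E using assms by simp
qed



definition Ah :: "real \<Rightarrow> real \<Rightarrow> int \<Rightarrow> real poly" where
  "Ah c s j = [:c, s + of_int j:]"
definition Ph :: "real \<Rightarrow> real \<Rightarrow> int \<Rightarrow> real poly" where
  "Ph \<alpha> e j = [:1, of_int j:] * [:\<alpha>, e + of_int j:]"
definition Iv :: "real \<Rightarrow> real \<Rightarrow> nat \<Rightarrow> int \<Rightarrow> real poly" where
  "Iv c s k j = [:1/c:] * (\<Sum>r<k. [:0, -(s + of_int j)/c:]^r)"

lemma X_power: "([:0,u:]::real poly)^n = monom (u^n) n"
proof -
  have "[:0,u:] = monom u 1" by (simp add: monom_Suc monom_0)
  then show ?thesis by (simp add: monom_power)
qed

lemma Ah_Iv: assumes "c \<noteq> 0" shows "eqm k (Ah c s j * Iv c s k j) 1"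
proof -
  define u where "u = -(s + of_int j)/c"
  have A: "Ah c s j = [:c:] * (1 - [:0,u:])" using assms
    by (simp add: Ah_def u_def one_pCons)
  have "Ah c s j * Iv c s k j = ([:c:] * [:1/c:]) * ((1 - [:0,u:]) * (\<Sum>r<k. [:0,u:]^r))"
    unfolding A Iv_def u_def by (simp only: ac_simps)
  also have "\<dots> = 1 - [:0,u:]^k" using assms
    by (simp only: one_diff_power_eq[symmetric]) simp
  finally show ?thesis unfolding eqm_def by (auto simp: X_power coeff_monom)
qed

definition UB :: "real \<Rightarrow> real \<Rightarrow> real poly poly" where
  "UB c s = [:0, [:-s/c, -1/c:]:]"
definition PhB :: "real \<Rightarrow> real \<Rightarrow> real poly poly" where
  "PhB \<alpha> e = [:[:1:], [:0,1:]:] * [:[:\<alpha>:], [:e,1:]:]"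
definition PhiB :: "real \<Rightarrow> real \<Rightarrow> real \<Rightarrow> real \<Rightarrow> nat \<Rightarrow> real poly poly" where
  "PhiB c s \<alpha> e k = PhB \<alpha> e * ([:[:1/c:]:] * (\<Sum>r<k. UB c s ^ r))"
definition PiB :: "real \<Rightarrow> real \<Rightarrow> real \<Rightarrow> real \<Rightarrow> nat \<Rightarrow> real poly poly" where
  "PiB c s \<alpha> e k = (\<Prod>l<k. sh (real l) (PhiB c s \<alpha> e k))"

lemma ev_const: "ev x [:A:] = [:poly A x:]"
  by (rule poly_eqI) (simp add: coeff_ev coeff_pCons split: nat.split)
lemma graded_const: "degree A = 0 \<Longrightarrow> graded [:A:]"
  by (auto simp: graded_def coeff_pCons split: nat.split)
lemma topp_const: "topp [:A:] = [:coeff A 0:]"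
  by (rule poly_eqI) (simp add: coeff_topp coeff_pCons split: nat.split)

lemma ev_UB: "ev x (UB c s) = [:0, -(s + x)/c:]"
  by (simp add: UB_def ev_lin diff_divide_distrib add_divide_distrib)

lemma ev_PhB: "ev x (PhB \<alpha> e) = [:1,x:] * [:\<alpha>, e + x:]"
proof -
  have "ev x (PhB \<alpha> e) = [:poly [:1:] x, poly [:0,1:] x:] * [:poly [:\<alpha>:] x, poly [:e,1:] x:]"
    by (simp only: PhB_def ev_mult ev_lin)
  moreover have "poly [:1:] x = 1" "poly [:0,1:] x = x" "poly [:\<alpha>:] x = \<alpha>" "poly [:e,1:] x = e + x"
    by simp_all
  ultimately show ?thesis by simp
qed

lemma ev_PhiB: "ev (of_int j) (PhiB c s \<alpha> e k) = Ph \<alpha> e j * Iv c s k j"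
proof -
  have c: "ev x [:[:1/c:]:] = [:1/c:]" for x by (simp add: ev_const)
  show ?thesis
    by (simp only: PhiB_def Ph_def Iv_def ev_mult ev_PhB c ev_sum ev_power ev_UB)
qed

lemma graded_UB: "graded (UB c s)" unfolding UB_def by (rule graded_lin) auto
lemma graded_PhB: "graded (PhB \<alpha> e)" unfolding PhB_def
  by (intro graded_mult graded_lin) auto
lemma graded_PhiB: "graded (PhiB c s \<alpha> e k)" unfolding PhiB_def
  by (intro graded_mult graded_PhB graded_const graded_sum graded_power graded_UB) auto
lemma graded_PiB: "graded (PiB c s \<alpha> e k)" unfolding PiB_def
  by (intro graded_prod graded_sh graded_PhiB)

lemma topp_PhiB: "topp (PhiB c s \<alpha> e k) = [:1,1:]*[:\<alpha>,1:]*([:1/c:]*(\<Sum>r<k. [:0,-1/c:]^r))"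
proof -
  have g1: "graded [:[:1:], [:0,1:]:]" "graded [:[:\<alpha>:], [:e,1:]:]"
    by (auto intro: graded_lin)
  have g2: "graded [:[:1/c:]:]" by (rule graded_const) simp
  have g3: "graded (\<Sum>r<k. UB c s ^ r)" by (intro graded_sum graded_power graded_UB)
  have t1: "topp [:[:1:], [:0,1:]:] = [:1,1:]" by (simp add: topp_lin)
  have t2: "topp [:[:\<alpha>:], [:e,1:]:] = [:\<alpha>,1:]" by (simp add: topp_lin)
  have t3: "topp [:[:1/c:]:] = [:1/c:]" by (simp add: topp_const)
  have t4: "topp (UB c s) = [:0, -1/c:]" by (simp add: UB_def topp_lin)
  have t5: "topp (\<Sum>r<k. UB c s ^ r) = (\<Sum>r<k. [:0,-1/c:]^r)"
    by (simp only: topp_sum topp_power[OF graded_UB] t4)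
  have "topp (PhiB c s \<alpha> e k) = topp (PhB \<alpha> e) * topp ([:[:1/c:]:] * (\<Sum>r<k. UB c s ^ r))"
    unfolding PhiB_def by (rule topp_mult[OF graded_PhB graded_mult[OF g2 g3]])
  also have "topp (PhB \<alpha> e) = [:1,1:]*[:\<alpha>,1:]"
    unfolding PhB_def by (simp only: topp_mult[OF g1] t1 t2)
  also have "topp ([:[:1/c:]:] * (\<Sum>r<k. UB c s ^ r)) = [:1/c:]*(\<Sum>r<k. [:0,-1/c:]^r)"
    by (simp only: topp_mult[OF g2 g3] t3 t5)
  finally show ?thesis .
qed

lemma topp_PiB: "topp (PiB c s \<alpha> e k) = topp (PhiB c s \<alpha> e k) ^ k"
  unfolding PiB_def
  by (simp add: topp_prod graded_sh graded_PhiB topp_sh)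

lemma ev_PiB: "ev (- real i) (PiB c s \<alpha> e k) = (\<Prod>l<k. Ph \<alpha> e (int l - int i) * Iv c s k (int l - int i))"
  unfolding PiB_def ev_prod ev_sh
proof (rule prod.cong[OF refl])
  fix l
  have "- real i + real l = of_int (int l - int i)" by simp
  then show "ev (- real i + real l) (PhiB c s \<alpha> e k) = Ph \<alpha> e (int l - int i) * Iv c s k (int l - int i)"
    by (simp only: ev_PhiB)
qed

lemma prod_window: "(\<Prod>j\<in>{-int i..int k - 1 - int i}. f j) = (\<Prod>l<k. f (int l - int i))"
  by (rule prod.reindex_bij_witness[of _ "\<lambda>l. int l - int i" "\<lambda>j. nat (j + int i)"]) auto

lemma prod_split3:
  assumes "i < k"
  shows "(\<Prod>j\<in>{-int k + 1..int k - 1}. f j) =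
     (\<Prod>j\<in>{-int k + 1 .. -int i - 1}. f j) * (\<Prod>j\<in>{-int i..int k - 1 - int i}. f j)
       * (\<Prod>j\<in>{int k - int i..int k - 1}. f j)"
proof -
  have e: "{-int k + 1..int k - 1} = {-int k + 1 .. -int i - 1} \<union> ({-int i..int k - 1 - int i} \<union> {int k - int i..int k - 1})"
    using assms by auto
  have "(\<Prod>j\<in>{-int i..int k - 1 - int i} \<union> {int k - int i..int k - 1}. f j) =
      (\<Prod>j\<in>{-int i..int k - 1 - int i}. f j) * (\<Prod>j\<in>{int k - int i..int k - 1}. f j)"
    by (rule prod.union_disjoint) auto
  moreover have "(\<Prod>j\<in>{-int k + 1 .. -int i - 1} \<union> ({-int i..int k - 1 - int i} \<union> {int k - int i..int k - 1}). f j)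
     = (\<Prod>j\<in>{-int k + 1 .. -int i - 1}. f j) * (\<Prod>j\<in>{-int i..int k - 1 - int i} \<union> {int k - int i..int k - 1}. f j)"
    by (rule prod.union_disjoint) auto
  ultimately show ?thesis unfolding e by (simp add: mult.assoc)
qed

lemma refl_lin: "b \<noteq> 0 \<Longrightarrow> reflect_poly [:a, b:] = [:b, a:]"
  by (rule poly_eqI) (auto simp: coeff_reflect_poly coeff_pCons degree_pCons_eq split: nat.split)



lemma slope_nonneg:
  fixes a b :: real
  assumes "\<And>N::nat. N \<ge> 1 \<Longrightarrow> a * real N + b > 0"
  shows "a \<ge> 0"
proof (rule ccontr)
  assume "\<not> a \<ge> 0"
  then have an: "a < 0" by simp
  obtain N :: nat where N: "max 1 (b / (-a)) < real N" using reals_Archimedean2 by blast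
  then have "N \<ge> 1" by simp
  have "b / (-a) < real N" using N by simp
  moreover have ma: "-a > 0" using an by simp
  ultimately have "b < real N * (-a)" by (metis pos_divide_less_eq)
  then have "a * real N + b < 0" by (simp add: algebra_simps)
  with assms[OF \<open>N \<ge> 1\<close>] show False by simp
qed

theorem lemma2:
  fixes a0 a1 b0 b1 :: real and k :: nat
  assumes "\<And>N::nat. N \<ge> 1 \<Longrightarrow> a1 * real N + a0 > 0"
      and "\<And>N::nat. N \<ge> 1 \<Longrightarrow> b1 * real N + b0 > 0"
      and "k \<ge> 1"
  shows "degree (calN a0 a1 b0 b1 k) = 2 * k"
proof -
  have a1: "a1 \<ge> 0" by (rule slope_nonneg[OF assms(1)])
  have b1: "b1 \<ge> 0" by (rule slope_nonneg[OF assms(2)])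
  define c where "c = 2 + a1 + b1"
  define s where "s = a0 + b0 - 2"
  define \<alpha> where "\<alpha> = 1 + a1"
  define e where "e = a0 - 1"
  have cpos: "c > 1" and apos: "\<alpha> > 0" and ca: "c > \<alpha>"
    using a1 b1 by (auto simp: c_def \<alpha>_def)
  have cnz: "c \<noteq> 0" and anz: "\<alpha> \<noteq> 0" using cpos apos by auto
  define S1 where "S1 i = {-int k + 1 .. -int i - 1}" for i :: nat
  define W where "W i = {-int i .. int k - 1 - int i}" for i :: nat
  define S2 where "S2 i = {int k - int i .. int k - 1}" for i :: nat
  define P where "P i = (\<Prod>j\<in>S1 i. factA a0 a1 b0 b1 j) * (\<Prod>j\<in>W i. factB a0 a1 j)
                         * (\<Prod>j\<in>S2 i. factA a0 a1 b0 b1 j)" for i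
  define R where "R i = (\<Prod>j\<in>S1 i. Ah c s j) * (\<Prod>j\<in>W i. Ph \<alpha> e j) * (\<Prod>j\<in>S2 i. Ah c s j)" for i
  define \<kappa> where "\<kappa> i = (-1::real)^i * of_nat ((k-1) choose i)" for i
  have calN_eq: "calN a0 a1 b0 b1 k = (\<Sum>i=0..k-1. smult (\<kappa> i) (P i))"
    unfolding calN_def P_def S1_def W_def S2_def \<kappa>_def ..
  have fA: "factA a0 a1 b0 b1 j = [:s + of_int j, c:]" for j
    by (simp add: factA_def s_def c_def algebra_simps)
  have fB: "factB a0 a1 j = [:of_int j, 1:] * [:e + of_int j, \<alpha>:]" for j
    by (simp add: factB_def e_def \<alpha>_def algebra_simps)
  have rA: "reflect_poly (factA a0 a1 b0 b1 j) = Ah c s j" for j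
    using cnz by (simp add: fA refl_lin Ah_def)
  have rB: "reflect_poly (factB a0 a1 j) = Ph \<alpha> e j" for j
    using anz by (simp only: fB reflect_poly_mult refl_lin[OF one_neq_zero] refl_lin[OF anz] Ph_def)
  have nzA: "factA a0 a1 b0 b1 j \<noteq> 0" for j using cnz by (simp add: fA)
  have nzB: "factB a0 a1 j \<noteq> 0" for j using anz by (simp add: fB)
  have dA: "degree (factA a0 a1 b0 b1 j) = 1" for j using cnz by (simp add: fA)
  have dB: "degree (factB a0 a1 j) = 2" for j using anz by (simp add: fB degree_mult_eq)
  have degP: "degree (P i) = 3*k - 1" if "i \<le> k-1" for i
  proof -
    have c1: "card (S1 i) = k - 1 - i" unfolding S1_def using that assms(3) by simp
    have c2: "card (W i) = k" unfolding W_def by simp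
    have c3: "card (S2 i) = i" unfolding S2_def using that assms(3) by simp
    have nz1: "(\<Prod>j\<in>S1 i. factA a0 a1 b0 b1 j) \<noteq> 0" "(\<Prod>j\<in>W i. factB a0 a1 j) \<noteq> 0"
      "(\<Prod>j\<in>S2 i. factA a0 a1 b0 b1 j) \<noteq> 0"
      using nzA nzB by (auto simp: S1_def W_def S2_def)
    have "degree (P i) = card (S1 i) + 2 * card (W i) + card (S2 i)"
      unfolding P_def using nz1
      by (simp add: degree_mult_eq degree_prod_eq_sum_degree dA dB nzA nzB)
    then show ?thesis using c1 c2 c3 that assms(3) by simp
  qed
  have rP: "reflect_poly (P i) = R i" for i
    unfolding P_def R_def reflect_poly_mult reflect_poly_prod rA rB ..
  have coeffP: "coeff (P i) n = (if n \<le> 3*k-1 then coeff (R i) (3*k-1-n) else 0)"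
    if "i \<le> k-1" for i n
  proof (cases "n \<le> 3*k-1")
    case True
    have ar: "3*k-1-(3*k-1-n) = n" "\<not> (3*k-1 < 3*k-1-n)" using True by auto
    have "coeff (reflect_poly (P i)) (3*k-1-n) = coeff (P i) (degree (P i) - (3*k-1-n))"
      using coeff_reflect_poly[of "P i" "3*k-1-n"] degP[OF that] ar(2) by simp
    then have "coeff (R i) (3*k-1-n) = coeff (P i) n" unfolding rP degP[OF that] ar(1) .
    then show ?thesis using True by simp
  next
    case False
    then show ?thesis using degP[OF that] by (simp add: coeff_eq_0)
  qed
  define T where "T = (\<Sum>i=0..k-1. smult (\<kappa> i) (R i))"
  have coeffN: "coeff (calN a0 a1 b0 b1 k) n = (if n \<le> 3*k-1 then coeff T (3*k-1-n) else 0)" for n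
  proof (cases "n \<le> 3*k-1")
    case True
    show ?thesis unfolding calN_eq T_def coeff_sum coeff_smult if_P[OF True]
      by (rule sum.cong[OF refl]) (simp add: coeffP[of _ n, unfolded if_P[OF True]])
  next
    case False
    show ?thesis unfolding calN_eq T_def coeff_sum coeff_smult if_not_P[OF False]
      by (rule sum.neutral) (simp add: coeffP[of _ n, unfolded if_not_P[OF False]])
  qed
  define H where "H = (\<Prod>j\<in>{-int k + 1..int k - 1}. Ah c s j)"
  define Pi where "Pi = PiB c s \<alpha> e k"
  define E where "E = (\<Sum>i=0..k-1. smult (\<kappa> i) (ev (- real i) Pi))"
  have eR: "eqm k (R i) (H * ev (- real i) Pi)" if "i \<le> k-1" for i
  proof -
    have ik: "i < k" using that assms(3) by simp
    have Hs: "H = (\<Prod>j\<in>S1 i. Ah c s j) * (\<Prod>j\<in>W i. Ah c s j) * (\<Prod>j\<in>S2 i. Ah c s j)"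
      unfolding H_def S1_def W_def S2_def by (rule prod_split3[OF ik])
    have evW: "ev (- real i) Pi = (\<Prod>j\<in>W i. Ph \<alpha> e j * Iv c s k j)"
      unfolding Pi_def ev_PiB W_def prod_window[where i=i and k=k and f="\<lambda>j. Ph \<alpha> e j * Iv c s k j"] ..
    have "H * ev (-real i) Pi = R i * (\<Prod>j\<in>W i. Ah c s j * Iv c s k j)"
      unfolding Hs evW prod.distrib R_def by (simp only: ac_simps)
    moreover have "eqm k (R i * (\<Prod>j\<in>W i. Ah c s j * Iv c s k j)) (R i * (\<Prod>j\<in>W i. 1))"
      by (intro eqm_mult eqm_refl eqm_prod Ah_Iv cnz) (simp add: W_def)
    ultimately show ?thesis by (simp add: eqm_sym)
  qed
  have eT: "eqm k T (H * E)"
  proof -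
    have "H * E = (\<Sum>i=0..k-1. smult (\<kappa> i) (H * ev (- real i) Pi))"
      unfolding E_def sum_distrib_left mult_smult_right ..
    then show ?thesis unfolding T_def using eR by (auto intro!: eqm_sum eqm_smult)
  qed
  have gPi: "degree (coeff Pi a) \<le> a" for a
    using graded_PiB[of c s \<alpha> e k] unfolding Pi_def graded_def by blast
  have cE: "coeff E a = fact (k-1) * coeff (coeff Pi a) (k-1)" if "a \<le> k-1" for a
  proof -
    have "coeff E a = fd (k-1) (\<lambda>i. poly (coeff Pi a) (- real i))"
      unfolding E_def fd_def coeff_sum coeff_smult coeff_ev \<kappa>_def atLeast0AtMost ..
    also have "\<dots> = fact (k-1) * coeff (coeff Pi a) (k-1)"
      by (rule fd_poly) (use gPi[of a] that in simp)
    finally show ?thesis .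
  qed
  have E0: "coeff E a = 0" if "a < k-1" for a
    using cE[of a] that gPi[of a] by (simp add: coeff_eq_0)
  have E1: "coeff E (k-1) \<noteq> 0"
  proof -
    have "coeff (coeff Pi (k-1)) (k-1) = coeff (topp Pi) (k-1)" by (simp add: coeff_topp)
    also have "\<dots> = coeff (([:1,1:]*[:\<alpha>,1:]*([:1/c:]*(\<Sum>r<k. [:0,-1/c:]^r)))^k) (k-1)"
      unfolding Pi_def topp_PiB topp_PhiB ..
    finally have "coeff (coeff Pi (k-1)) (k-1) > 0" using lam_pos[OF apos ca cpos assms(3)] by simp
    then show ?thesis using cE[of "k-1"] by simp
  qed
  have H0: "coeff H 0 \<noteq> 0"
    using cnz by (simp add: H_def poly_0_coeff_0[symmetric] poly_prod Ah_def)
  have HE0: "coeff (H*E) r = 0" if "r < k-1" for r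
    unfolding coeff_mult using that E0 by (intro sum.neutral) auto
  have HE1: "coeff (H*E) (k-1) \<noteq> 0"
  proof -
    have "coeff (H*E) (k-1) = (\<Sum>i\<le>k-1. if i = 0 then coeff H 0 * coeff E (k-1) else 0)"
      unfolding coeff_mult using E0 by (intro sum.cong) auto
    also have "\<dots> = coeff H 0 * coeff E (k-1)" by (simp add: sum.delta)
    finally show ?thesis using H0 E1 by simp
  qed
  have T0: "coeff T r = 0" if "r < k-1" for r
    using eqm_coeff[OF eT, of r] HE0[OF that] that by simp
  have T1: "coeff T (k-1) \<noteq> 0"
    using eqm_coeff[OF eT, of "k-1"] HE1 assms(3) by simp
  have le: "degree (calN a0 a1 b0 b1 k) \<le> 2*k"
  proof (rule degree_le, intro allI impI)
    fix n assume "2*k < n"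
    then show "coeff (calN a0 a1 b0 b1 k) n = 0"
      using T0[of "3*k-1-n"] by (simp add: coeffN)
  qed
  have ge: "2*k \<le> degree (calN a0 a1 b0 b1 k)"
  proof (rule le_degree)
    have "3*k-1-2*k = k-1" by simp
    then show "coeff (calN a0 a1 b0 b1 k) (2*k) \<noteq> 0"
      using T1 assms(3) by (simp add: coeffN)
  qed
  show ?thesis using le ge by simp
qed

end
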